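(* For each $n\in\mathbb{N}$, if a labelled formula $w:\phi$ (with $\phi\in\mathcal{L}^1$) is derivable in $\mathsf{Ldm}_{n}^{1}\mathsf{L}$, then it has a derivation in $\mathsf{Ldm}_{n}^{1}\mathsf{L}$ in which every sequent is forestlike.
   Context: Single-agent setting: $Ag=\{1\}$. Formulas $\phi ::= p \mid \overline{p} \mid (\phi\wedge\phi) \mid (\phi\vee\phi) \mid \Box\phi \mid \Diamond\phi \mid [1]\phi \mid \langle 1\rangle\phi$. A labelled sequent $\mathcal{R},\Gamma$ consists of a multiset $\mathcal{R}$ of relational atoms $\mathcal{R}_1xy$ and a multiset $\Gamma$ of labelled formulas $x:\phi$. Calculus $\mathsf{Ldm}_{n}^{1}\mathsf{L}$ (premise(s) / conclusion; derivations are finite trees with $(\mathsf{id})$ leaves): $(\mathsf{id})$: / $\mathcal{R}, w:p, w:\overline{p},\Gamma$. $(\wedge)$: $\mathcal{R}, w:\phi\wedge\psi, w:\phi,\Gamma$ and $\mathcal{R}, w:\phi\wedge\psi, w:\psi,\Gamma$ / $\mathcal{R}, w:\phi\wedge\psi,\Gamma$. $(\vee)$: $\mathcal{R}, w:\phi\vee\psi, w:\phi, w:\psi,\Gamma$ / $\mathcal{R}, w:\phi\vee\psi,\Gamma$. $(\Box)$: $\mathcal{R}, w:\Box\phi, v:\phi,\Gamma$ / $\mathcal{R}, w:\Box\phi,\Gamma$ ($v$ fresh). $(\Diamond)$: $\mathcal{R}, w:\Diamond\phi, u:\phi,\Gamma$ / $\mathcal{R}, w:\Diamond\phi,\Gamma$.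 $(\mathsf{IOA})$: $\mathcal{R},\mathcal{R}_1uv,\Gamma$ / $\mathcal{R},\Gamma$ ($v$ fresh). $([1])$: $\mathcal{R},\mathcal{R}_1wv, w:[1]\phi, v:\phi,\Gamma$ / $\mathcal{R}, w:[1]\phi,\Gamma$ ($v$ fresh). $(\mathsf{Pr}_1)$: $\mathcal{R}, w:\langle 1\rangle\phi, u:\phi,\Gamma$ / $\mathcal{R}, w:\langle 1\rangle\phi,\Gamma$, applicable only if $w=u$ or there are labels $w=z_0,\dots,z_k=u$ ($k\ge1$) with $\mathcal{R}_1z_lz_{l+1}\in\mathcal{R}$ or $\mathcal{R}_1z_{l+1}z_l\in\mathcal{R}$ for each $l<k$. $(\mathsf{APC}^1_n)$ (only if $n>0$): premises $\mathcal{R},\mathcal{R}_1w_kw_j,\Gamma$ for all $0\le k\le n-1$, $k+1\le j\le n$ / $\mathcal{R},\Gamma$. "Fresh" means not occurring in the conclusion. Forestlike sequents. The graph $G(\Lambda)$ of a sequent $\Lambda$ has the labels of $\Lambda$ as vertices and a directed edge $(x,y)$ for each $\mathcal{R}_1xy\in\Lambda$. A graph is a tree iff it has a node (root) with exactly one directed path to every other node; a forest is a disjoint union of trees. $\Lambda$ is forestlike iff $G(\Lambda)$ is a forest. *)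

theory Defs
  imports Main "HOL-Library.Multiset"
begin

text \<open>Formulas of the single-agent language (atoms indexed by nat).
  Stit is [1], DStit is the dual <1>.\<close>
datatype form =
    Atom nat | NAtom nat
  | And form form | Or form form
  | Box form | Dia form
  | Stit form | DStit form

type_synonym label = nat

text \<open>A labelled sequent: multiset of relational atoms R_1 x y (pairs (x,y))
  and multiset of labelled formulas x:phi.\<close>
type_synonym sequent = "(label \<times> label) multiset \<times> (label \<times> form) multiset"

definition labels :: "sequent \<Rightarrow> label set" where
  "labels S = fst ` set_mset (fst S) \<union> snd ` set_mset (fst S) \<union> fst ` set_mset (snd S)"

definition fresh :: "label \<Rightarrow> sequent \<Rightarrow> bool" where
  "fresh v S \<longleftrightarrow> v \<notin> labels S"

definition connected :: "(label \<times> label) multiset \<Rightarrow> label \<Rightarrow> label \<Rightarrow> bool" where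
  "connected R w u \<longleftrightarrow> (\<lambda>x y. (x, y) \<in># R \<or> (y, x) \<in># R)\<^sup>*\<^sup>* w u"

text \<open>Derivations in Ldm_n^1 L, restricted so that every sequent in the derivation
  satisfies the predicate P.  With P = (\<lambda>_. True) this is plain derivability.\<close>
inductive deriv :: "(sequent \<Rightarrow> bool) \<Rightarrow> nat \<Rightarrow> sequent \<Rightarrow> bool"
  for P :: "sequent \<Rightarrow> bool" and n :: nat where
  id: "P (R, add_mset (w, Atom p) (add_mset (w, NAtom p) \<Gamma>))
     \<Longrightarrow> deriv P n (R, add_mset (w, Atom p) (add_mset (w, NAtom p) \<Gamma>))"
| conj: "P (R, add_mset (w, And \<phi> \<psi>) \<Gamma>)
     \<Longrightarrow> deriv P n (R, add_mset (w, And \<phi> \<psi>) (add_mset (w, \<phi>) \<Gamma>))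
     \<Longrightarrow> deriv P n (R, add_mset (w, And \<phi> \<psi>) (add_mset (w, \<psi>) \<Gamma>))
     \<Longrightarrow> deriv P n (R, add_mset (w, And \<phi> \<psi>) \<Gamma>)"
| disj: "P (R, add_mset (w, Or \<phi> \<psi>) \<Gamma>)
     \<Longrightarrow> deriv P n (R, add_mset (w, Or \<phi> \<psi>) (add_mset (w, \<phi>) (add_mset (w, \<psi>) \<Gamma>)))
     \<Longrightarrow> deriv P n (R, add_mset (w, Or \<phi> \<psi>) \<Gamma>)"
| box: "P (R, add_mset (w, Box \<phi>) \<Gamma>)
     \<Longrightarrow> fresh v (R, add_mset (w, Box \<phi>) \<Gamma>)
     \<Longrightarrow> deriv P n (R, add_mset (w, Box \<phi>) (add_mset (v, \<phi>) \<Gamma>))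
     \<Longrightarrow> deriv P n (R, add_mset (w, Box \<phi>) \<Gamma>)"
| dia: "P (R, add_mset (w, Dia \<phi>) \<Gamma>)
     \<Longrightarrow> deriv P n (R, add_mset (w, Dia \<phi>) (add_mset (u, \<phi>) \<Gamma>))
     \<Longrightarrow> deriv P n (R, add_mset (w, Dia \<phi>) \<Gamma>)"
| ioa: "P (R, \<Gamma>)
     \<Longrightarrow> fresh v (R, \<Gamma>)
     \<Longrightarrow> deriv P n (add_mset (u, v) R, \<Gamma>)
     \<Longrightarrow> deriv P n (R, \<Gamma>)"
| stit: "P (R, add_mset (w, Stit \<phi>) \<Gamma>)
     \<Longrightarrow> fresh v (R, add_mset (w, Stit \<phi>) \<Gamma>)
     \<Longrightarrow> deriv P n (add_mset (w, v) R, add_mset (w, Stit \<phi>) (add_mset (v, \<phi>) \<Gamma>))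
     \<Longrightarrow> deriv P n (R, add_mset (w, Stit \<phi>) \<Gamma>)"
| pr: "P (R, add_mset (w, DStit \<phi>) \<Gamma>)
     \<Longrightarrow> connected R w u
     \<Longrightarrow> deriv P n (R, add_mset (w, DStit \<phi>) (add_mset (u, \<phi>) \<Gamma>))
     \<Longrightarrow> deriv P n (R, add_mset (w, DStit \<phi>) \<Gamma>)"
| apc: "P (R, \<Gamma>)
     \<Longrightarrow> 0 < n
     \<Longrightarrow> (\<forall>k j. k \<le> n - 1 \<and> k + 1 \<le> j \<and> j \<le> n
            \<longrightarrow> deriv P n (add_mset (ws k, ws j) R, \<Gamma>))
     \<Longrightarrow> deriv P n (R, \<Gamma>)"

abbreviation derivable :: "nat \<Rightarrow> sequent \<Rightarrow> bool" where
  "derivable n S \<equiv> deriv (\<lambda>_. True) n S"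

definition edges :: "sequent \<Rightarrow> (label \<times> label) set" where
  "edges S = set_mset (fst S)"

definition dpath :: "('a \<times> 'a) set \<Rightarrow> 'a list \<Rightarrow> 'a \<Rightarrow> 'a \<Rightarrow> bool" where
  "dpath E vs x y \<longleftrightarrow> vs \<noteq> [] \<and> hd vs = x \<and> last vs = y \<and>
     (\<forall>i. Suc i < length vs \<longrightarrow> (vs ! i, vs ! Suc i) \<in> E)"

definition is_tree :: "'a set \<Rightarrow> ('a \<times> 'a) set \<Rightarrow> bool" where
  "is_tree V E \<longleftrightarrow> (\<exists>r\<in>V. \<forall>v\<in>V. v \<noteq> r \<longrightarrow> (\<exists>!vs. dpath E vs r v))"

definition is_forest :: "'a set \<Rightarrow> ('a \<times> 'a) set \<Rightarrow> bool" where
  "is_forest V E \<longleftrightarrow> (\<exists>Ps. (\<forall>C\<in>Ps. C \<noteq> {}) \<and> \<Union>Ps = V \<and>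
      (\<forall>C\<in>Ps. \<forall>D\<in>Ps. C \<noteq> D \<longrightarrow> C \<inter> D = {}) \<and>
      (\<forall>(x, y)\<in>E. \<exists>C\<in>Ps. x \<in> C \<and> y \<in> C) \<and>
      (\<forall>C\<in>Ps. is_tree C (E \<inter> C \<times> C)))"

definition forestlike :: "sequent \<Rightarrow> bool" where
  "forestlike S \<longleftrightarrow> is_forest (labels S) (edges S)"

end

theory Submission
  imports Defs
begin

definition Inv :: "(label \<times> label) set \<Rightarrow> bool" where
  "Inv E \<longleftrightarrow> (\<forall>x x' y. (x,y)\<in>E \<longrightarrow> (x',y)\<in>E \<longrightarrow> x = x') \<and> acyclic E"

lemma dpath_single: "dpath E [a] x y \<longleftrightarrow> a = x \<and> a = y"
  by (simp add: dpath_def)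

lemma dpath_snoc:
  assumes "vs \<noteq> []"
  shows "dpath E (vs @ [b]) x y \<longleftrightarrow> dpath E vs x (last vs) \<and> (last vs, b) \<in> E \<and> b = y"
proof
  assume h: "dpath E (vs @ [b]) x y"
  have 1: "\<forall>i. Suc i < length vs \<longrightarrow> (vs ! i, vs ! Suc i) \<in> E"
  proof (intro allI impI)
    fix i assume "Suc i < length vs"
    with h have "((vs@[b]) ! i, (vs@[b]) ! Suc i) \<in> E" unfolding dpath_def by auto
    thus "(vs ! i, vs ! Suc i) \<in> E" using \<open>Suc i < length vs\<close> by (simp add: nth_append)
  qed
  have "Suc (length vs - 1) < length (vs @ [b])" using assms by simp
  hence "((vs@[b]) ! (length vs - 1), (vs@[b]) ! Suc (length vs - 1)) \<in> E"
    using h unfolding dpath_def by blast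
  hence 2: "(last vs, b) \<in> E" using assms by (simp add: nth_append last_conv_nth)
  show "dpath E vs x (last vs) \<and> (last vs, b) \<in> E \<and> b = y"
    using h 1 2 assms unfolding dpath_def by auto
next
  assume h: "dpath E vs x (last vs) \<and> (last vs, b) \<in> E \<and> b = y"
  show "dpath E (vs @ [b]) x y" unfolding dpath_def
  proof (intro conjI allI impI)
    show "vs @ [b] \<noteq> []" by simp
    show "hd (vs @ [b]) = x" using h assms by (simp add: dpath_def)
    show "last (vs @ [b]) = y" using h by simp
    fix i assume i: "Suc i < length (vs @ [b])"
    show "((vs @ [b]) ! i, (vs @ [b]) ! Suc i) \<in> E"
    proof (cases "Suc i < length vs")
      case True thus ?thesis using h by (simp add: nth_append dpath_def)
    next
      case False
      hence "i = length vs - 1" "Suc i = length vs" using i assms by auto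
      thus ?thesis using h assms by (auto simp: nth_append last_conv_nth)
    qed
  qed
qed

lemma dpath_rtrancl: "dpath E vs x y \<Longrightarrow> (x,y) \<in> E\<^sup>*"
proof (induction vs arbitrary: y rule: rev_induct)
  case Nil thus ?case by (simp add: dpath_def)
next
  case (snoc b vs)
  show ?case
  proof (cases "vs = []")
    case True thus ?thesis using snoc by (auto simp: dpath_def)
  next
    case False
    from dpath_snoc[OF False] snoc.prems have "dpath E vs x (last vs)" "(last vs,b)\<in>E" "b=y" by auto
    thus ?thesis using snoc.IH by (meson rtrancl.rtrancl_into_rtrancl)
  qed
qed

lemma dpath_unique:
  assumes I: "Inv E"
  shows "dpath E vs r v \<Longrightarrow> dpath E vs' r v \<Longrightarrow> vs = vs'"
proof (induction vs arbitrary: v vs' rule: rev_induct)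
  case Nil thus ?case by (simp add: dpath_def)
next
  case (snoc b ys)
  have ac: "acyclic E" and ind: "\<And>x x' y. (x,y)\<in>E \<Longrightarrow> (x',y)\<in>E \<Longrightarrow> x = x'"
    using I unfolding Inv_def by blast+
  obtain ys' b' where vs': "vs' = ys' @ [b']"
    using snoc.prems(2) by (metis dpath_def rev_exhaust)
  show ?case
  proof (cases "ys = []")
    case True
    hence bv: "b = r" "b = v" using snoc.prems(1) by (auto simp: dpath_def)
    show ?thesis
    proof (cases "ys' = []")
      case True thus ?thesis using vs' snoc.prems(2) bv \<open>ys = []\<close> by (simp add: dpath_def)
    next
      case False
      hence "dpath E ys' r (last ys')" "(last ys', v) \<in> E"
        using snoc.prems(2) vs' dpath_snoc[OF False] by auto
      hence "(r, r) \<in> E\<^sup>+" using bv dpath_rtrancl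
        by (metis rtrancl_into_trancl1)
      thus ?thesis using ac by (simp add: acyclic_def)
    qed
  next
    case False
    hence p: "dpath E ys r (last ys)" "(last ys, v) \<in> E" "b = v"
      using snoc.prems(1) dpath_snoc[OF False] by auto
    show ?thesis
    proof (cases "ys' = []")
      case True
      hence "v = r" using vs' snoc.prems(2) by (simp add: dpath_def)
      hence "(r, r) \<in> E\<^sup>+" using p dpath_rtrancl
        by (metis rtrancl_into_trancl1)
      thus ?thesis using ac by (simp add: acyclic_def)
    next
      case False
      hence p': "dpath E ys' r (last ys')" "(last ys', v) \<in> E" "b' = v"
        using snoc.prems(2) vs' dpath_snoc[OF False] by auto
      have "last ys' = last ys" using ind p p' by blast
      hence "ys = ys'" using snoc.IH p p' by metis
      thus ?thesis using vs' p p' by simp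
    qed
  qed
qed

lemma dpath_exists:
  assumes "(r, v) \<in> E\<^sup>*" "r \<in> V" "snd ` E \<subseteq> V"
  shows "\<exists>vs. dpath (E \<inter> {x\<in>V. (r,x)\<in>E\<^sup>*} \<times> {x\<in>V. (r,x)\<in>E\<^sup>*}) vs r v"
  using assms(1)
proof (induction rule: rtrancl_induct)
  case base thus ?case by (rule exI[of _ "[r]"]) (simp add: dpath_def)
next
  case (step y z)
  then obtain vs where vs: "dpath (E \<inter> {x\<in>V. (r,x)\<in>E\<^sup>*} \<times> {x\<in>V. (r,x)\<in>E\<^sup>*}) vs r y" by blast
  have ne: "vs \<noteq> []" using vs by (simp add: dpath_def)
  have ly: "last vs = y" using vs by (simp add: dpath_def)
  have yV: "y \<in> V" using step.hyps(1) assms(2,3) by (metis image_subset_iff rtranclE snd_conv)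
  have zV: "z \<in> V" using step.hyps(2) assms(3) by force
  have "dpath (E \<inter> {x\<in>V. (r,x)\<in>E\<^sup>*} \<times> {x\<in>V. (r,x)\<in>E\<^sup>*}) (vs @ [z]) r z"
    using dpath_snoc[OF ne] vs ly yV zV step by auto
  thus ?case by blast
qed

lemma anc_comparable:
  assumes ind: "\<And>x x' y. (x,y)\<in>E \<Longrightarrow> (x',y)\<in>E \<Longrightarrow> x = x'"
  shows "(a, x) \<in> E\<^sup>* \<Longrightarrow> (b, x) \<in> E\<^sup>* \<Longrightarrow> (a, b) \<in> E\<^sup>* \<or> (b, a) \<in> E\<^sup>*"
proof (induction rule: rtrancl_induct)
  case base thus ?case by simp
next
  case (step y z)
  from step.prems show ?case
  proof (cases rule: rtranclE)
    case base thus ?thesis using step.hyps by (meson rtrancl.rtrancl_into_rtrancl)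
  next
    case (step y')
    hence "y' = y" using ind \<open>(y, z) \<in> E\<close> by blast
    thus ?thesis using step.IH step by blast
  qed
qed

lemma root_exists:
  assumes "finite E" "Inv E"
  shows "\<exists>r. (r, x) \<in> E\<^sup>* \<and> (\<forall>z. (z, r) \<notin> E)"
proof -
  have wf: "wf E" using assms finite_acyclic_wf unfolding Inv_def by blast
  have "x \<in> {y. (y, x) \<in> E\<^sup>*}" by simp
  then obtain r where r: "r \<in> {y. (y, x) \<in> E\<^sup>*}" "\<And>z. (z, r) \<in> E \<Longrightarrow> z \<notin> {y. (y, x) \<in> E\<^sup>*}"
    using wf by (metis wfE_min)
  have "\<forall>z. (z, r) \<notin> E"
  proof (intro allI notI)
    fix z assume "(z, r) \<in> E"
    moreover hence "(z, x) \<in> E\<^sup>*" using r(1) by (simp add: converse_rtrancl_into_rtrancl)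
    ultimately show False using r(2) by blast
  qed
  thus ?thesis using r(1) by blast
qed

lemma forest_of_Inv:
  assumes fin: "finite E" and I: "Inv E" and EV: "fst ` E \<subseteq> V" "snd ` E \<subseteq> V"
  shows "is_forest V E"
proof -
  have ac: "acyclic E" and ind: "\<And>x x' y. (x,y)\<in>E \<Longrightarrow> (x',y)\<in>E \<Longrightarrow> x = x'"
    using I unfolding Inv_def by blast+
  have EV2: "x \<in> V \<and> y \<in> V" if "(x,y) \<in> E" for x y
  proof -
    have a: "x \<in> fst ` E" using that by (metis fst_conv imageI)
    have b: "y \<in> snd ` E" using that by (metis snd_conv imageI)
    show ?thesis using subsetD[OF EV(1) a] subsetD[OF EV(2) b] by simp
  qed
  have EV1: "x \<in> V" "y \<in> V" if "(x,y) \<in> E" for x y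
    using EV2[OF that] by simp_all
  define Rt where "Rt = {r\<in>V. \<forall>z. (z, r) \<notin> E}"
  define C where "C r = {x\<in>V. (r,x)\<in>E\<^sup>*}" for r
  have uniq: "r1 = r2" if "r1 \<in> Rt" "r2 \<in> Rt" "(r1, x) \<in> E\<^sup>*" "(r2, x) \<in> E\<^sup>*" for r1 r2 x
  proof -
    have "(r1, r2) \<in> E\<^sup>* \<or> (r2, r1) \<in> E\<^sup>*" by (rule anc_comparable[OF ind that(3,4)])
    moreover have "\<forall>z. (z, r1) \<notin> E" "\<forall>z. (z, r2) \<notin> E" using that(1,2) unfolding Rt_def by auto
    ultimately show ?thesis by (metis rtranclE)
  qed
  have rootof: "\<exists>r\<in>Rt. x \<in> C r" if "x \<in> V" for x
  proof -
    obtain r where r: "(r, x) \<in> E\<^sup>*" "\<forall>z. (z, r) \<notin> E" using root_exists[OF fin I] by blast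
    have "r \<in> V" using r(1) that EV1 by (metis converse_rtranclE)
    hence "r \<in> Rt" "x \<in> C r" using r that unfolding Rt_def C_def by auto
    thus ?thesis by blast
  qed
  show ?thesis unfolding is_forest_def
  proof (intro exI[of _ "C ` Rt"] conjI ballI)
    fix D assume "D \<in> C ` Rt" thus "D \<noteq> {}" unfolding C_def Rt_def by auto
  next
    have "C r \<subseteq> V" for r unfolding C_def by blast
    moreover have "V \<subseteq> \<Union> (C ` Rt)" using rootof by blast
    ultimately show "\<Union> (C ` Rt) = V" by blast
  next
    fix D1 D2 assume d: "D1 \<in> C ` Rt" "D2 \<in> C ` Rt"
    then obtain r1 r2 where r: "r1 \<in> Rt" "r2 \<in> Rt" "D1 = C r1" "D2 = C r2" by blast
    show "D1 \<noteq> D2 \<longrightarrow> D1 \<inter> D2 = {}"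
    proof (intro impI)
      assume "D1 \<noteq> D2"
      hence "r1 \<noteq> r2" using r by blast
      show "D1 \<inter> D2 = {}"
      proof (rule ccontr)
        assume "D1 \<inter> D2 \<noteq> {}"
        then obtain x where "(r1, x) \<in> E\<^sup>*" "(r2, x) \<in> E\<^sup>*" using r unfolding C_def by blast
        thus False using uniq r \<open>r1 \<noteq> r2\<close> by blast
      qed
    qed
  next
    fix e assume e: "e \<in> E"
    obtain x y where xy: "e = (x, y)" by force
    have exy: "(x,y) \<in> E" using e xy by simp
    then obtain r where r: "r \<in> Rt" "x \<in> C r" using rootof EV1 by blast
    have "(r, y) \<in> E\<^sup>*" using r(2) exy unfolding C_def by (blast intro: rtrancl_into_rtrancl)
    hence "y \<in> C r" using EV1[OF exy] unfolding C_def by simp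
    thus "case e of (x, y) \<Rightarrow> \<exists>D\<in>C ` Rt. x \<in> D \<and> y \<in> D" using r xy by blast
  next
    fix D assume "D \<in> C ` Rt"
    then obtain r where r: "r \<in> Rt" "D = C r" by blast
    have rV: "r \<in> V" using r unfolding Rt_def by simp
    show "is_tree D (E \<inter> D \<times> D)" unfolding is_tree_def
    proof (intro bexI[of _ r] ballI impI)
      show "r \<in> D" using r rV unfolding C_def by simp
      fix v assume v: "v \<in> D" "v \<noteq> r"
      have I': "Inv (E \<inter> D \<times> D)" using I unfolding Inv_def
        by (meson Int_iff acyclic_subset subsetI)
      have rv: "(r, v) \<in> E\<^sup>*" using v r unfolding C_def by simp
      obtain vs where "dpath (E \<inter> D \<times> D) vs r v"
        using dpath_exists[OF rv rV EV(2)] r unfolding C_def by blast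
      thus "\<exists>!vs. dpath (E \<inter> D \<times> D) vs r v" using dpath_unique[OF I'] by blast
    qed
  qed
qed


lemma conn_refl: "connected R x x" by (simp add: connected_def)

lemma conn_edge: "(x,y) \<in># R \<Longrightarrow> connected R x y" "(x,y) \<in># R \<Longrightarrow> connected R y x"
  unfolding connected_def by (auto intro: r_into_rtranclp)

lemma conn_trans: "connected R x y \<Longrightarrow> connected R y z \<Longrightarrow> connected R x z"
  unfolding connected_def by (rule rtranclp_trans)

lemma conn_sym: "connected R x y \<Longrightarrow> connected R y x"
  unfolding connected_def
proof (induction rule: rtranclp_induct)
  case base thus ?case by simp
next
  case (step b c)
  have "(\<lambda>x y. (x, y) \<in># R \<or> (y, x) \<in># R) c b" using step.hyps(2) by blast
  thus ?case using step.IH by (rule converse_rtranclp_into_rtranclp)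
qed

lemma conn_mono:
  assumes H: "\<forall>x y. (x,y) \<in># R1 \<longrightarrow> connected R2 x y"
  shows "connected R1 a b \<Longrightarrow> connected R2 a b"
  unfolding connected_def[of R1]
proof (induction rule: rtranclp_induct)
  case base thus ?case by (rule conn_refl)
next
  case (step b c)
  have "connected R2 b c" using step.hyps(2) H conn_sym by blast
  thus ?case using step.IH conn_trans by blast
qed

lemma conn_add: "connected R a b \<Longrightarrow> connected (add_mset e R) a b"
  by (rule conn_mono[of R]) (auto intro: conn_edge)

lemma conn_rtrancl: "(a,b) \<in> (set_mset R)\<^sup>* \<Longrightarrow> connected R a b"
proof (induction rule: rtrancl_induct)
  case base thus ?case by (rule conn_refl)
next
  case (step y z) thus ?case using conn_edge conn_trans by (metis)
qed

definition ends :: "(label \<times> label) multiset \<Rightarrow> label set" where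
  "ends R = fst ` set_mset R \<union> snd ` set_mset R"

lemma labels_eq: "labels (R, G) = ends R \<union> fst ` set_mset G"
  by (auto simp: labels_def ends_def)

lemma ends_add[simp]: "ends (add_mset (x,y) R) = insert x (insert y (ends R))"
  by (auto simp: ends_def)

lemma forestlike_Inv: "Inv (set_mset R) \<Longrightarrow> forestlike (R, G)"
  unfolding forestlike_def edges_def
  by (rule forest_of_Inv) (auto simp: labels_def)

lemma Inv_add_root:
  assumes "Inv E" "\<forall>z. (z,b) \<notin> E" "(b,a) \<notin> E\<^sup>*"
  shows "Inv (insert (a,b) E)"
  using assms unfolding Inv_def by (auto simp: acyclic_insert)

lemma rt_ends: "(r, x) \<in> (set_mset R)\<^sup>* \<Longrightarrow> r = x \<or> r \<in> ends R"
  by (erule converse_rtranclE) (force simp: ends_def)+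

definition Sim :: "(label \<times> label) multiset \<Rightarrow> (label \<times> form) multiset \<Rightarrow> (label \<times> label) multiset \<Rightarrow> bool" where
  "Sim R G R' \<longleftrightarrow> Inv (set_mset R') \<and> ends R' \<subseteq> labels (R, G) \<and> (\<forall>x y. (x,y) \<in># R \<longrightarrow> connected R' x y)"

lemma Sim_mono: "Sim R G R' \<Longrightarrow> set_mset G \<subseteq> set_mset G' \<Longrightarrow> Sim R G' R'"
  unfolding Sim_def labels_eq by blast

lemma Sim_fresh: "Sim R G R' \<Longrightarrow> fresh v (R, G) \<Longrightarrow> fresh v (R', G)"
  unfolding Sim_def fresh_def labels_eq by blast

lemma Sim_leaf:
  assumes S: "Sim R G R'" and f: "fresh v (R, G)" and u: "u \<noteq> v"
    and G': "set_mset G \<subseteq> set_mset G'"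
  shows "Sim (add_mset (u,v) R) G' (add_mset (u,v) R')"
proof -
  have I: "Inv (set_mset R')" and e: "ends R' \<subseteq> labels (R, G)"
    and c: "\<forall>x y. (x,y) \<in># R \<longrightarrow> connected R' x y" using S unfolding Sim_def by blast+
  have vn: "v \<notin> ends R'" using e f unfolding fresh_def by blast
  have "\<forall>z. (z,v) \<notin> set_mset R'" using vn unfolding ends_def by force
  moreover have "(v,u) \<notin> (set_mset R')\<^sup>*" using rt_ends vn u by blast
  ultimately have "Inv (insert (u,v) (set_mset R'))" using Inv_add_root I by blast
  moreover have "ends (add_mset (u,v) R') \<subseteq> labels (add_mset (u,v) R, G')"
    using e G' unfolding labels_eq by auto
  moreover have "\<forall>x y. (x,y) \<in># add_mset (u,v) R \<longrightarrow> connected (add_mset (u,v) R') x y"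
    using c conn_add conn_edge by auto
  ultimately show ?thesis unfolding Sim_def by simp
qed

lemma main:
  "deriv (\<lambda>_. True) n S \<Longrightarrow> \<forall>R'. Sim (fst S) (snd S) R' \<longrightarrow> deriv forestlike n (R', snd S)"
proof (induction rule: deriv.induct)
  case (id R w p \<Gamma>)
  then show ?case using deriv.id forestlike_Inv unfolding Sim_def by auto
next
  case (conj R w \<phi> \<psi> \<Gamma>)
  show ?case
  proof (intro allI impI)
    fix R' assume S: "Sim (fst (R, add_mset (w, And \<phi> \<psi>) \<Gamma>)) (snd (R, add_mset (w, And \<phi> \<psi>) \<Gamma>)) R'"
    hence S': "Sim R (add_mset (w, And \<phi> \<psi>) \<Gamma>) R'" by simp
    have "Sim R (add_mset (w, And \<phi> \<psi>) (add_mset (w, \<phi>) \<Gamma>)) R'" by (rule Sim_mono[OF S']) auto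
    hence 1: "deriv forestlike n (R', add_mset (w, And \<phi> \<psi>) (add_mset (w, \<phi>) \<Gamma>))"
      using conj.IH(1) by simp
    have "Sim R (add_mset (w, And \<phi> \<psi>) (add_mset (w, \<psi>) \<Gamma>)) R'" by (rule Sim_mono[OF S']) auto
    hence 2: "deriv forestlike n (R', add_mset (w, And \<phi> \<psi>) (add_mset (w, \<psi>) \<Gamma>))"
      using conj.IH(2) by simp
    have "forestlike (R', add_mset (w, And \<phi> \<psi>) \<Gamma>)" using S' forestlike_Inv unfolding Sim_def by blast
    thus "deriv forestlike n (R', snd (R, add_mset (w, And \<phi> \<psi>) \<Gamma>))"
      using deriv.conj[OF _ 1 2] by simp
  qed
next
  case (disj R w \<phi> \<psi> \<Gamma>)
  show ?case
  proof (intro allI impI)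
    fix R' assume S: "Sim (fst (R, add_mset (w, Or \<phi> \<psi>) \<Gamma>)) (snd (R, add_mset (w, Or \<phi> \<psi>) \<Gamma>)) R'"
    hence S': "Sim R (add_mset (w, Or \<phi> \<psi>) \<Gamma>) R'" by simp
    have "Sim R (add_mset (w, Or \<phi> \<psi>) (add_mset (w, \<phi>) (add_mset (w, \<psi>) \<Gamma>))) R'" by (rule Sim_mono[OF S']) auto
    hence 1: "deriv forestlike n (R', add_mset (w, Or \<phi> \<psi>) (add_mset (w, \<phi>) (add_mset (w, \<psi>) \<Gamma>)))"
      using disj.IH by simp
    have "forestlike (R', add_mset (w, Or \<phi> \<psi>) \<Gamma>)" using S' forestlike_Inv unfolding Sim_def by blast
    thus "deriv forestlike n (R', snd (R, add_mset (w, Or \<phi> \<psi>) \<Gamma>))"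
      using deriv.disj[OF _ 1] by simp
  qed
next
  case (box R w \<phi> \<Gamma> v)
  show ?case
  proof (intro allI impI)
    fix R' assume S: "Sim (fst (R, add_mset (w, Box \<phi>) \<Gamma>)) (snd (R, add_mset (w, Box \<phi>) \<Gamma>)) R'"
    hence S': "Sim R (add_mset (w, Box \<phi>) \<Gamma>) R'" by simp
    have "Sim R (add_mset (w, Box \<phi>) (add_mset (v, \<phi>) \<Gamma>)) R'" by (rule Sim_mono[OF S']) auto
    hence 1: "deriv forestlike n (R', add_mset (w, Box \<phi>) (add_mset (v, \<phi>) \<Gamma>))"
      using box.IH by simp
    have f: "fresh v (R', add_mset (w, Box \<phi>) \<Gamma>)" using Sim_fresh[OF S' box.hyps(2)] .
    have "forestlike (R', add_mset (w, Box \<phi>) \<Gamma>)" using S' forestlike_Inv unfolding Sim_def by blast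
    thus "deriv forestlike n (R', snd (R, add_mset (w, Box \<phi>) \<Gamma>))"
      using deriv.box[OF _ f 1] by simp
  qed
next
  case (dia R w \<phi> \<Gamma> u)
  show ?case
  proof (intro allI impI)
    fix R' assume S: "Sim (fst (R, add_mset (w, Dia \<phi>) \<Gamma>)) (snd (R, add_mset (w, Dia \<phi>) \<Gamma>)) R'"
    hence S': "Sim R (add_mset (w, Dia \<phi>) \<Gamma>) R'" by simp
    have "Sim R (add_mset (w, Dia \<phi>) (add_mset (u, \<phi>) \<Gamma>)) R'" by (rule Sim_mono[OF S']) auto
    hence 1: "deriv forestlike n (R', add_mset (w, Dia \<phi>) (add_mset (u, \<phi>) \<Gamma>))"
      using dia.IH by simp
    have "forestlike (R', add_mset (w, Dia \<phi>) \<Gamma>)" using S' forestlike_Inv unfolding Sim_def by blast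
    thus "deriv forestlike n (R', snd (R, add_mset (w, Dia \<phi>) \<Gamma>))"
      using deriv.dia[OF _ 1] by simp
  qed
next
  case (ioa R \<Gamma> v u)
  show ?case
  proof (intro allI impI)
    fix R' assume S: "Sim (fst (R, \<Gamma>)) (snd (R, \<Gamma>)) R'"
    hence S': "Sim R \<Gamma> R'" by simp
    show "deriv forestlike n (R', snd (R, \<Gamma>))"
    proof (cases "u = v")
      case True
      have "Sim (add_mset (u, v) R) \<Gamma> R'" using S' True conn_refl unfolding Sim_def labels_eq by auto
      thus ?thesis using ioa.IH by simp
    next
      case False
      have "Sim (add_mset (u, v) R) \<Gamma> (add_mset (u, v) R')" using Sim_leaf[OF S' ioa.hyps(2) False] by simp
      hence 1: "deriv forestlike n (add_mset (u, v) R', \<Gamma>)" using ioa.IH by simp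
      have f: "fresh v (R', \<Gamma>)" using Sim_fresh[OF S' ioa.hyps(2)] .
      have "forestlike (R', \<Gamma>)" using S' forestlike_Inv unfolding Sim_def by blast
      thus ?thesis using deriv.ioa[OF _ f 1] by simp
    qed
  qed
next
  case (stit R w \<phi> \<Gamma> v)
  show ?case
  proof (intro allI impI)
    fix R' assume S: "Sim (fst (R, add_mset (w, Stit \<phi>) \<Gamma>)) (snd (R, add_mset (w, Stit \<phi>) \<Gamma>)) R'"
    hence S': "Sim R (add_mset (w, Stit \<phi>) \<Gamma>) R'" by simp
    have wv: "w \<noteq> v" using stit.hyps(2) unfolding fresh_def labels_def by auto
    have "Sim (add_mset (w, v) R) (add_mset (w, Stit \<phi>) (add_mset (v, \<phi>) \<Gamma>)) (add_mset (w, v) R')"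
      by (rule Sim_leaf[OF S' stit.hyps(2) wv]) auto
    hence 1: "deriv forestlike n (add_mset (w, v) R', add_mset (w, Stit \<phi>) (add_mset (v, \<phi>) \<Gamma>))"
      using stit.IH by simp
    have f: "fresh v (R', add_mset (w, Stit \<phi>) \<Gamma>)" using Sim_fresh[OF S' stit.hyps(2)] .
    have "forestlike (R', add_mset (w, Stit \<phi>) \<Gamma>)" using S' forestlike_Inv unfolding Sim_def by blast
    thus "deriv forestlike n (R', snd (R, add_mset (w, Stit \<phi>) \<Gamma>))"
      using deriv.stit[OF _ f 1] by simp
  qed
next
  case (pr R w \<phi> \<Gamma> u)
  show ?case
  proof (intro allI impI)
    fix R' assume S: "Sim (fst (R, add_mset (w, DStit \<phi>) \<Gamma>)) (snd (R, add_mset (w, DStit \<phi>) \<Gamma>)) R'"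
    hence S': "Sim R (add_mset (w, DStit \<phi>) \<Gamma>) R'" by simp
    have "Sim R (add_mset (w, DStit \<phi>) (add_mset (u, \<phi>) \<Gamma>)) R'" by (rule Sim_mono[OF S']) auto
    hence 1: "deriv forestlike n (R', add_mset (w, DStit \<phi>) (add_mset (u, \<phi>) \<Gamma>))"
      using pr.IH by simp
    have c: "connected R' w u" using conn_mono[of R R' w u] S' pr.hyps(2) unfolding Sim_def by blast
    have "forestlike (R', add_mset (w, DStit \<phi>) \<Gamma>)" using S' forestlike_Inv unfolding Sim_def by blast
    thus "deriv forestlike n (R', snd (R, add_mset (w, DStit \<phi>) \<Gamma>))"
      using deriv.pr[OF _ c 1] by simp
  qed
next
  case (apc R \<Gamma> ws)
  show ?case
  proof (intro allI impI)
    fix R' assume S: "Sim (fst (R, \<Gamma>)) (snd (R, \<Gamma>)) R'"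
    hence S': "Sim R \<Gamma> R'" by simp
    have I: "Inv (set_mset R')" and e: "ends R' \<subseteq> labels (R, \<Gamma>)"
      and c: "\<forall>x y. (x,y) \<in># R \<longrightarrow> connected R' x y" using S' unfolding Sim_def by blast+
    have IH: "\<And>k j R''. k \<le> n - 1 \<Longrightarrow> k + 1 \<le> j \<Longrightarrow> j \<le> n \<Longrightarrow> Sim (add_mset (ws k, ws j) R) \<Gamma> R''
       \<Longrightarrow> deriv forestlike n (R'', \<Gamma>)"
      using apc.IH by simp
    show "deriv forestlike n (R', snd (R, \<Gamma>))"
    proof (cases "\<exists>k j. k \<le> n - 1 \<and> k + 1 \<le> j \<and> j \<le> n \<and> connected R' (ws k) (ws j)")
      case True
      then obtain k j where kj: "k \<le> n - 1" "k + 1 \<le> j" "j \<le> n" "connected R' (ws k) (ws j)" by blast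
      have "Sim (add_mset (ws k, ws j) R) \<Gamma> R'" using I e c kj(4) unfolding Sim_def labels_eq by auto
      thus ?thesis using IH[OF kj(1-3)] by simp
    next
      case False
      define rt where "rt x = (SOME r. (r,x) \<in> (set_mset R')\<^sup>* \<and> (\<forall>z. (z,r) \<notin> set_mset R'))" for x
      have rt: "(rt x, x) \<in> (set_mset R')\<^sup>* \<and> (\<forall>z. (z, rt x) \<notin> set_mset R')" for x
        unfolding rt_def by (rule someI_ex) (rule root_exists[OF finite_set_mset I])
      have prem: "deriv forestlike n (add_mset (rt (ws k), rt (ws j)) R', \<Gamma>)"
        if kj: "k \<le> n - 1" "k + 1 \<le> j" "j \<le> n" for k j
      proof -
        have nc: "\<not> connected R' (ws k) (ws j)" using False kj by blast
        have ca: "connected R' (ws k) (rt (ws k))" using rt conn_rtrancl conn_sym by blast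
        have cb: "connected R' (rt (ws j)) (ws j)" using rt conn_rtrancl by blast
        have nba: "(rt (ws j), rt (ws k)) \<notin> (set_mset R')\<^sup>*"
        proof
          assume "(rt (ws j), rt (ws k)) \<in> (set_mset R')\<^sup>*"
          hence "connected R' (rt (ws k)) (rt (ws j))" using conn_rtrancl conn_sym by blast
          thus False using ca cb nc conn_trans by blast
        qed
        have I2: "Inv (insert (rt (ws k), rt (ws j)) (set_mset R'))"
          using Inv_add_root[OF I _ nba] rt by blast
        have e2: "ends (add_mset (rt (ws k), rt (ws j)) R') \<subseteq> labels (add_mset (ws k, ws j) R, \<Gamma>)"
          using e rt_ends rt[of "ws k"] rt[of "ws j"] unfolding labels_eq by auto
        have c2: "\<forall>x y. (x,y) \<in># add_mset (ws k, ws j) R \<longrightarrow> connected (add_mset (rt (ws k), rt (ws j)) R') x y"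
        proof (intro allI impI)
          fix x y assume "(x,y) \<in># add_mset (ws k, ws j) R"
          hence "(x,y) = (ws k, ws j) \<or> (x,y) \<in># R" by auto
          thus "connected (add_mset (rt (ws k), rt (ws j)) R') x y"
          proof
            assume xy: "(x,y) = (ws k, ws j)"
            have "connected (add_mset (rt (ws k), rt (ws j)) R') (ws k) (rt (ws k))" using ca conn_add by blast
            moreover have "connected (add_mset (rt (ws k), rt (ws j)) R') (rt (ws k)) (rt (ws j))"
              using conn_edge by simp
            moreover have "connected (add_mset (rt (ws k), rt (ws j)) R') (rt (ws j)) (ws j)" using cb conn_add by blast
            ultimately show ?thesis using xy conn_trans by blast
          next
            assume "(x,y) \<in># R" thus ?thesis using c conn_add by blast
          qed
        qed
        have "Sim (add_mset (ws k, ws j) R) \<Gamma> (add_mset (rt (ws k), rt (ws j)) R')"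
          using I2 e2 c2 unfolding Sim_def by simp
        thus ?thesis using IH[OF kj] by simp
      qed
      have "forestlike (R', \<Gamma>)" using I forestlike_Inv by blast
      thus ?thesis using deriv.apc[of forestlike R' \<Gamma> n "\<lambda>i. rt (ws i)"] apc.hyps(2) prem by simp
    qed
  qed
qed

theorem corollary2:
  fixes n :: nat and w :: label and \<phi> :: form
  assumes "derivable n ({#}, {#(w, \<phi>)#})"
  shows "deriv forestlike n ({#}, {#(w, \<phi>)#})"
proof -
  have "Sim {#} {#(w, \<phi>)#} {#}" unfolding Sim_def Inv_def ends_def by (simp add: acyclic_def)
  thus ?thesis using main[OF assms] by simp
qed

end
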